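(* There exists $M>0$ such that $$\inf_{\lambda\ge M,\ \beta>0}\left[\rho\,\phi(a)+\gamma\,\Phi(a)+\frac{2\gamma\,\phi(a)}{3\sqrt{n}}+\frac{\gamma}{12n-1}\right]>0,$$ where $n,\rho,a,\gamma$ are the functions of $(\beta,\lambda)$ defined in the context.
   Context: $\phi$ and $\Phi$ denote the standard normal density and distribution function. For $\lambda>0$ and $\beta\ge 0$ set $n=\lambda+\beta\sqrt{\lambda}$, $\rho=\lambda/n$, $a=\sqrt{-2n(1-\rho+\ln\rho)}$ (note $1-\rho+\ln\rho\le 0$), and $\gamma=(n-\lambda)/\sqrt{n}=\beta\sqrt{\rho}$. *)

theory Defs
  imports "HOL-Probability.Probability"
begin

definition phi :: "real \<Rightarrow> real" where
  "phi x = std_normal_density x"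

definition Phi :: "real \<Rightarrow> real" where
  "Phi x = measure (density lborel std_normal_density) {..x}"

definition nn :: "real \<Rightarrow> real \<Rightarrow> real" where
  "nn lam bet = lam + bet * sqrt lam"

definition rho :: "real \<Rightarrow> real \<Rightarrow> real" where
  "rho lam bet = lam / nn lam bet"

definition aa :: "real \<Rightarrow> real \<Rightarrow> real" where
  "aa lam bet = sqrt (- 2 * nn lam bet * (1 - rho lam bet + ln (rho lam bet)))"

definition gam :: "real \<Rightarrow> real \<Rightarrow> real" where
  "gam lam bet = (nn lam bet - lam) / sqrt (nn lam bet)"

definition F :: "real \<Rightarrow> real \<Rightarrow> real" where
  "F lam bet = rho lam bet * phi (aa lam bet) + gam lam bet * Phi (aa lam bet)
     + 2 * gam lam bet * phi (aa lam bet) / (3 * sqrt (nn lam bet))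
     + gam lam bet / (12 * nn lam bet - 1)"

end

theory Submission imports Defs begin
lemma Phi_lb: assumes "a \<ge> 0" shows "Phi a \<ge> phi 1"
proof -
  let ?M = "density lborel std_normal_density"
  interpret P: prob_space ?M using prob_space_normal_density by simp
  have "emeasure ?M {-1..0} = (\<integral>\<^sup>+x. ennreal (std_normal_density x) * indicator {-1..0} x \<partial>lborel)"
    by (subst emeasure_density) auto
  also have "\<dots> \<ge> (\<integral>\<^sup>+x. ennreal (phi 1) * indicator {-1..0::real} x \<partial>lborel)"
  proof (intro nn_integral_mono)
    fix x :: real
    show "ennreal (phi 1) * indicator {-1..0} x \<le> ennreal (std_normal_density x) * indicator {-1..0} x"
    proof (cases "x \<in> {-1..0}")
      case True
      then have "x^2 \<le> 1" by (auto simp: power2_eq_square abs_le_square_iff intro: mult_le_one[of "-x" "-x", simplified])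
      then have "phi 1 \<le> std_normal_density x" unfolding phi_def std_normal_density_def by (auto intro!: divide_right_mono)
      then show ?thesis using True by (auto intro: ennreal_leI)
    qed auto
  qed
  finally have "emeasure ?M {-1..0} \<ge> ennreal (phi 1)" by (simp add: nn_integral_cmult_indicator)
  then have "measure ?M {-1..0} \<ge> phi 1"
    by (simp add: P.emeasure_eq_measure phi_def)
  moreover have "measure ?M {-1..0} \<le> measure ?M {..a}"
    using assms by (intro P.finite_measure_mono) auto
  ultimately show ?thesis unfolding Phi_def by simp
qed

lemma phi_pos: "phi x > 0" unfolding phi_def by (simp add: normal_density_pos)

lemma phi_mono: assumes "0 \<le> a" "a \<le> b" shows "phi b \<le> phi a"
proof -
  have "a^2 \<le> b^2" using assms by (simp add: power_mono)
  then show ?thesis unfolding phi_def std_normal_density_def by (auto intro!: divide_right_mono)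
qed

lemma Phi_nonneg: "Phi a \<ge> 0" unfolding Phi_def by simp

lemma main:
  fixes lam bet :: real
  assumes lam: "lam \<ge> 2" and bet: "bet > 0"
  shows "F lam bet \<ge> min (phi 1) (phi 2 / 2)"
proof -
  define s where "s = sqrt lam"
  have s1: "s > 1" using lam unfolding s_def by (simp add: real_less_rsqrt)
  have lam_s: "lam = s^2" using lam unfolding s_def by simp
  define n where "n = nn lam bet"
  have n_eq: "n = s*(s+bet)" unfolding n_def nn_def s_def using lam by (simp add: algebra_simps power2_eq_square[symmetric])
  have npos: "n \<ge> 2" using n_eq s1 bet lam lam_s by (smt (verit, best) mult_mono power2_eq_square)
  define r where "r = rho lam bet"
  have r_eq: "r = s/(s+bet)" proof -
    have "r = lam / n" unfolding r_def rho_def n_def by simp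
    also have "\<dots> = s/(s+bet)" unfolding n_eq lam_s using s1 bet by (simp add: power2_eq_square)
    finally show ?thesis .
  qed
  have rpos: "r > 0" "r \<le> 1" using r_eq s1 bet by auto
  define g where "g = gam lam bet"
  have g_eq: "g = bet * s / sqrt n" unfolding g_def gam_def n_def[symmetric] using n_eq lam_s by (simp add: algebra_simps power2_eq_square)
  have gpos: "g \<ge> 0" using g_eq s1 bet npos by simp
  define a where "a = aa lam bet"
  define x where "x = -2*n*(1 - r + ln r)"
  have "ln r \<le> r - 1" using ln_le_minus_one rpos by simp
  then have x0: "x \<ge> 0" unfolding x_def using npos by (simp add: mult_nonneg_nonpos)
  have a_eq: "a = sqrt x" unfolding a_def aa_def x_def n_def r_def by simp
  have a0: "a \<ge> 0" using a_eq x0 by simp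
  have Fdef: "F lam bet = r * phi a + g * Phi a + 2*g*phi a/(3 * sqrt n) + g/(12*n-1)"
    unfolding F_def r_def g_def a_def n_def by simp
  have t3: "2*g*phi a/(3 * sqrt n) \<ge> 0" using gpos phi_pos[of a] npos by simp
  have t4: "g/(12*n-1) \<ge> 0" using gpos npos by simp
  have t1: "r * phi a \<ge> 0" using rpos phi_pos[of a] by simp
  have t2: "g * Phi a \<ge> 0" using gpos Phi_nonneg[of a] by simp
  show ?thesis
  proof (cases "g \<ge> 1")
    case True
    have "g * Phi a \<ge> 1 * phi 1" using True Phi_lb[OF a0] phi_pos[of 1] by (intro mult_mono) auto
    then show ?thesis unfolding Fdef using t1 t3 t4 by linarith
  next
    case False
    have bs: "bet \<le> s"
    proof (rule ccontr)
      assume "\<not> bet \<le> s"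
      then have "s * (s+bet) \<le> s * (2*bet)" using s1 by (intro mult_left_mono) auto
      then have "n \<le> 2*bet* s" using n_eq by (simp add: algebra_simps)
      then have "sqrt n \<le> sqrt (2*bet* s)" by simp
      moreover have "sqrt (2*bet* s) \<le> bet* s"
        using \<open>\<not> bet \<le> s\<close> s1 bet
      proof -
        have "s * s \<le> bet * s" using \<open>\<not> bet \<le> s\<close> s1 by (intro mult_right_mono) auto
        then have "2 \<le> bet * s" using lam lam_s by (simp add: power2_eq_square)
        then have "2*(bet* s) \<le> (bet* s)*(bet* s)" using s1 bet by (intro mult_right_mono) auto
        then have "2*bet* s \<le> (bet* s)^2" by (simp add: power2_eq_square mult.assoc)
        then have "sqrt (2*bet* s) \<le> sqrt ((bet* s)^2)" by (rule real_sqrt_le_mono)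
        then show ?thesis using s1 bet by simp
      qed
      ultimately have "sqrt n \<le> bet* s" by linarith
      then have "g \<ge> 1" unfolding g_eq using npos by (simp add: le_divide_eq)
      then show False using False by simp
    qed
    have r2: "r \<ge> 1/2" unfolding r_eq using bs s1 bet by (simp add: le_divide_eq)
    have g2: "g^2 = bet^2* s^2/n" unfolding g_eq using npos by (simp add: power_divide power_mult_distrib)
    have "n \<le> 2* s^2" using n_eq bs s1 by (simp add: power2_eq_square algebra_simps)
    then have "bet^2* s^2/n \<ge> bet^2* s^2/(2* s^2)" using npos s1 by (intro divide_left_mono) auto
    then have "g^2 \<ge> bet^2/2" using g2 s1 by simp
    moreover have "g^2 < 1" using False gpos by (simp add: power_less_one_iff abs_square_less_1)
    ultimately have bet2: "bet^2 < 2" by simp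
    have lnb: "- ln r \<le> 1/r - 1" using ln_le_minus_one[of "1/r"] rpos by (simp add: ln_div)
    have "-2*n*(1 - r + ln r) \<le> 2*n*((1-r)^2/r)"
    proof -
      have "r - 1 - ln r \<le> (1-r)^2/r" using lnb rpos by (simp add: field_simps power2_eq_square)
      then have "(2*n)*(r - 1 - ln r) \<le> (2*n)*((1-r)^2/r)" using npos by (intro mult_left_mono) auto
      then show ?thesis by (simp add: algebra_simps)
    qed
    also have "2*n*((1-r)^2/r) = 2*((1-r)^2/r * n)" by simp
    also have "(1-r)^2/r * n = bet^2"
    proof -
      have sb: "s + bet > 0" using s1 bet by simp
      have "1 - r = bet/(s+bet)" unfolding r_eq using sb by (simp add: field_simps)
      then have "(1-r)^2/r * n = (bet/(s+bet))^2 / (s/(s+bet)) * (s*(s+bet))" unfolding r_eq n_eq by simp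
      also have "\<dots> = (bet^2 / (s*(s+bet))) * (s*(s+bet))" using sb s1
        by (simp add: power_divide power2_eq_square)
      also have "\<dots> = bet^2" using sb s1 by simp
      finally show ?thesis .
    qed
    finally have "-2*n*(1 - r + ln r) \<le> 2*bet^2" .
    then have "a^2 \<le> 2*bet^2" unfolding a_eq using x0 x_def by simp
    then have "a^2 < 2^2" using bet2 by simp
    then have "a < 2" using a0 using power_less_imp_less_base[of a 2 2] by simp
    then have "phi a \<ge> phi 2" using phi_mono a0 by simp
    then have "r * phi a \<ge> (1/2) * phi 2" using r2 phi_pos[of 2] by (intro mult_mono) auto
    then show ?thesis unfolding Fdef using t2 t3 t4 by linarith
  qed
qed

theorem lemma4:
  shows "\<exists>M>0. \<exists>c>0. \<forall>lam bet. lam \<ge> M \<longrightarrow> bet > 0 \<longrightarrow> F lam bet \<ge> c"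
  using main phi_pos by (intro exI[of _ 2] conjI exI[of _ "min (phi 1) (phi 2 / 2)"]) auto

end
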